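(* Let $K\subset\mathbb{R}^n$ be compact and $f:K\to\mathbb{R}^m$ continuous. For any $\epsilon>0$ there exists $F:\mathbb{R}^n\to\mathbb{R}^m$ such that (1) $F$ is the feedforward function of a radial neural network with $N(f,K,\epsilon)$ hidden layers whose widths are all $\max(n,m)+1$, and (2) $|F(x)-f(x)|<\epsilon$ for all $x\in K$.
   Context: $N(f,K,\epsilon)$ is the minimal $N$ for which there exist $c_1,\dots,c_N\in K$, $r_1,\dots,r_N\in(0,1)$ with $K\subseteq\bigcup_iB_{r_i}(c_i)$ and $f(B_{r_i}(c_i)\cap K)\subseteq B_\epsilon(f(c_i))$ for all $i$, where $B_r(c)$ is the open ball. For $h:\mathbb{R}\to\mathbb{R}$ piecewise differentiable, the radial rescaling function $h^{(k)}:\mathbb{R}^k\to\mathbb{R}^k$ is $h^{(k)}(v)=h(|v|)v/|v|$ ($v\ne0$), $h^{(k)}(0)=0$. A radial neural network with widths $(n_0,\dots,n_L)$ has weights $W_i\in\mathbb{R}^{n_i\times n_{i-1}}$, biases $b_i\in\mathbb{R}^{n_i}$, radial rescaling functions $\rho_i$ on $\mathbb{R}^{n_i}$; hidden layers are $1,\dots,L-1$; feedforward function $F=F_L$, $F_0=\mathrm{id}$, $F_i(x)=\rho_i(W_iF_{i-1}(x)+b_i)$. *)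

theory Defs
  imports "HOL-Analysis.Analysis"
begin

text \<open>Vectors of R^k are represented as functions nat => real vanishing at
  all indices >= k (explicit-carrier convention, since the dimensions
  n, m, max(n,m)+1 all occur in one statement). On this subspace the product
  topology of nat => real coincides with the Euclidean topology.\<close>

definition inRn :: "nat \<Rightarrow> (nat \<Rightarrow> real) \<Rightarrow> bool" where
  "inRn k v \<longleftrightarrow> (\<forall>j\<ge>k. v j = 0)"

definition vnorm :: "nat \<Rightarrow> (nat \<Rightarrow> real) \<Rightarrow> real" where
  "vnorm k v = sqrt (\<Sum>j<k. (v j)^2)"

definition edist :: "nat \<Rightarrow> (nat \<Rightarrow> real) \<Rightarrow> (nat \<Rightarrow> real) \<Rightarrow> real" where
  "edist k u v = vnorm k (\<lambda>j. u j - v j)"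

definition eball :: "nat \<Rightarrow> (nat \<Rightarrow> real) \<Rightarrow> real \<Rightarrow> (nat \<Rightarrow> real) set" where
  "eball k c r = {v. inRn k v \<and> edist k c v < r}"

definition Ncov :: "nat \<Rightarrow> nat \<Rightarrow> ((nat \<Rightarrow> real) \<Rightarrow> (nat \<Rightarrow> real)) \<Rightarrow> (nat \<Rightarrow> real) set \<Rightarrow> real \<Rightarrow> nat" where
  "Ncov n m f K \<epsilon> = (LEAST N. \<exists>(c :: nat \<Rightarrow> nat \<Rightarrow> real) (r :: nat \<Rightarrow> real).
      (\<forall>i<N. c i \<in> K \<and> 0 < r i \<and> r i < 1) \<and>
      K \<subseteq> (\<Union>i<N. eball n (c i) (r i)) \<and>
      (\<forall>i<N. f ` (eball n (c i) (r i) \<inter> K) \<subseteq> eball m (f (c i)) \<epsilon>))"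

definition piecewise_diff :: "(real \<Rightarrow> real) \<Rightarrow> bool" where
  "piecewise_diff h \<longleftrightarrow> (\<exists>S. finite S \<and> (\<forall>x. x \<notin> S \<longrightarrow> h differentiable (at x)))"

definition radial :: "nat \<Rightarrow> (real \<Rightarrow> real) \<Rightarrow> (nat \<Rightarrow> real) \<Rightarrow> (nat \<Rightarrow> real)" where
  "radial k h v = (if vnorm k v = 0 then (\<lambda>_. 0)
      else (\<lambda>j. if j < k then h (vnorm k v) * v j / vnorm k v else 0))"

definition affine_layer :: "nat \<Rightarrow> nat \<Rightarrow> (nat \<Rightarrow> nat \<Rightarrow> real) \<Rightarrow> (nat \<Rightarrow> real) \<Rightarrow> (nat \<Rightarrow> real) \<Rightarrow> (nat \<Rightarrow> real)" where
  "affine_layer k0 k1 W b x = (\<lambda>i. if i < k1 then (\<Sum>j<k0. W i j * x j) + b i else 0)"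

text \<open>Feedforward function: widths list (n_0,...,n_L), layers list of
  (W_i, b_i, h_i) for i = 1..L; F_i = rho_i(W_i F_{i-1} + b_i).\<close>
fun feedforward :: "nat list \<Rightarrow> ((nat \<Rightarrow> nat \<Rightarrow> real) \<times> (nat \<Rightarrow> real) \<times> (real \<Rightarrow> real)) list
      \<Rightarrow> (nat \<Rightarrow> real) \<Rightarrow> (nat \<Rightarrow> real)" where
  "feedforward (k0 # k1 # ks) ((W, b, h) # ls) x =
     feedforward (k1 # ks) ls (radial k1 h (affine_layer k0 k1 W b x))"
| "feedforward _ _ x = x"

definition is_radial_nn_fun :: "nat list \<Rightarrow> ((nat \<Rightarrow> real) \<Rightarrow> (nat \<Rightarrow> real)) \<Rightarrow> bool" where
  "is_radial_nn_fun ns F \<longleftrightarrow> (\<exists>ls. length ns = length ls + 1 \<and>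
      (\<forall>(W, b, h) \<in> set ls. piecewise_diff h) \<and> F = feedforward ns ls)"

end

theory Submission
  imports Defs
begin

lemma tendsto_fun_iff:
  fixes g :: "'a \<Rightarrow> nat \<Rightarrow> real"
  shows "(g \<longlongrightarrow> l) F \<longleftrightarrow> (\<forall>i. ((\<lambda>c. g c i) \<longlongrightarrow> l i) F)"
proof -
  have "(g \<longlongrightarrow> l) F \<longleftrightarrow> limitin (product_topology (\<lambda>_. euclidean) UNIV) g l F"
    by (metis limitin_canonical_iff euclidean_product_topology)
  also have "\<dots> \<longleftrightarrow> (\<forall>i. limitin euclidean (\<lambda>c. g c i) (l i) F)"
    by (simp add: limitin_componentwise)
  finally show ?thesis by simp
qed

lemma cont_edist: "continuous_on UNIV (\<lambda>y. edist k x y)"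
  unfolding edist_def vnorm_def
  by (intro continuous_intros continuous_on_product_coordinates) 

lemma coord_le_vnorm: "j < k \<Longrightarrow> \<bar>v j\<bar> \<le> vnorm k v"
proof -
  assume "j < k"
  have "(v j)^2 \<le> (\<Sum>i<k. (v i)^2)"
    using \<open>j<k\<close> by (intro member_le_sum) auto
  then show ?thesis unfolding vnorm_def using real_le_rsqrt[of "\<bar>v j\<bar>"] by simp
qed

lemma edist_self: "edist k x x = 0"
  by (simp add: edist_def vnorm_def)

lemma eps_delta:
  assumes K: "K \<subseteq> {x. inRn n x}" and cf: "continuous_on K f" and xK: "x \<in> K" and e: "\<epsilon> > 0"
  shows "\<exists>\<delta>>0. \<forall>y\<in>K. edist n x y < \<delta> \<longrightarrow> edist m (f x) (f y) < \<epsilon>"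
proof (rule ccontr)
  assume "\<not> ?thesis"
  then have "\<forall>k::nat. \<exists>y. y \<in> K \<and> edist n x y < 1 / Suc k \<and> \<not> edist m (f x) (f y) < \<epsilon>"
    by (metis of_nat_0_less_iff zero_less_Suc zero_less_divide_1_iff)
  then obtain y where y: "\<And>k. y k \<in> K" "\<And>k. edist n x (y k) < 1 / Suc k"
    "\<And>k. \<not> edist m (f x) (f (y k)) < \<epsilon>"
    by metis
  have "y \<longlonglongrightarrow> x"
    unfolding tendsto_fun_iff
  proof
    fix i
    show "(\<lambda>k. y k i) \<longlonglongrightarrow> x i"
    proof (cases "i < n")
      case True
      show ?thesis
      proof (rule LIMSEQ_I)
        fix r :: real assume "r > 0"
        then obtain N where N: "inverse (real (Suc N)) < r" using reals_Archimedean by blast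
        show "\<exists>N. \<forall>k\<ge>N. norm (y k i - x i) < r"
        proof (intro exI allI impI)
          fix k assume "N \<le> k"
          have "\<bar>x i - y k i\<bar> \<le> edist n x (y k)"
            unfolding edist_def using coord_le_vnorm[OF True, of "\<lambda>j. x j - y k j"] by simp
          also have "\<dots> < 1 / Suc k" by (rule y(2))
          also have "\<dots> \<le> inverse (real (Suc N))" using \<open>N \<le> k\<close>
            by (simp add: divide_simps)
          finally show "norm (y k i - x i) < r" using N by simp
        qed
      qed
    next
      case False
      have "\<And>k. inRn n (y k)" "inRn n x" using y(1) xK K by blast+
      then have "\<And>k. y k i = 0" "x i = 0" using False by (auto simp: inRn_def)
      then show ?thesis by simp
    qed
  qed
  then have "(\<lambda>k. f (y k)) \<longlonglongrightarrow> f x"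
    by (intro continuous_on_tendsto_compose[OF cf _ xK]) (auto simp: y(1))
  then have "(\<lambda>k. edist m (f x) (f (y k))) \<longlonglongrightarrow> edist m (f x) (f x)"
    by (intro continuous_on_tendsto_compose[OF cont_edist]) auto
  then have "eventually (\<lambda>k. edist m (f x) (f (y k)) < \<epsilon>) sequentially"
    using e by (intro order_tendstoD(2)) (auto simp: edist_self)
  then obtain k where "edist m (f x) (f (y k)) < \<epsilon>" by (auto simp: eventually_sequentially)
  then show False using y(3) by blast
qed


lemma cover_exists:
  assumes K: "K \<subseteq> {x. inRn n x}" and cK: "compact K" and cf: "continuous_on K f"
    and fm: "\<forall>x\<in>K. inRn m (f x)" and e: "\<epsilon> > 0"
  shows "\<exists>N (c :: nat \<Rightarrow> nat \<Rightarrow> real) (r :: nat \<Rightarrow> real).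
      (\<forall>i<N. c i \<in> K \<and> 0 < r i \<and> r i < 1) \<and>
      K \<subseteq> (\<Union>i<N. eball n (c i) (r i)) \<and>
      (\<forall>i<N. f ` (eball n (c i) (r i) \<inter> K) \<subseteq> eball m (f (c i)) \<epsilon>)"
proof -
  have "\<forall>x\<in>K. \<exists>\<delta>>0. \<forall>y\<in>K. edist n x y < \<delta> \<longrightarrow> edist m (f x) (f y) < \<epsilon>"
    using eps_delta[OF K cf _ e] by blast
  then obtain \<delta> where d: "\<And>x. x \<in> K \<Longrightarrow> \<delta> x > 0"
    "\<And>x y. x \<in> K \<Longrightarrow> y \<in> K \<Longrightarrow> edist n x y < \<delta> x \<Longrightarrow> edist m (f x) (f y) < \<epsilon>"
    by metis
  define \<rho> where "\<rho> x = min (\<delta> x) (1/2)" for x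
  define Op where "Op x = {y. edist n x y < \<rho> x}" for x
  have "open (Op x)" for x
    unfolding Op_def by (intro open_Collect_less cont_edist continuous_on_const)
  moreover have "K \<subseteq> (\<Union>x\<in>K. Op x)"
    using d(1) by (auto simp: Op_def \<rho>_def edist_self)
  ultimately obtain C where C: "C \<subseteq> K" "finite C" "K \<subseteq> (\<Union>x\<in>C. Op x)"
    using compactE_image[OF cK] by metis
  obtain N :: nat and g where g: "C = g ` {i. i < N}"
    using finite_imp_nat_seg_image_inj_on[OF C(2)] by auto
  show ?thesis
  proof (intro exI conjI allI impI)
    fix i assume "i < N"
    then have gi: "g i \<in> K" using g C(1) by blast
    show "g i \<in> K" by (rule gi)
    show "0 < \<rho> (g i)" using d(1)[OF gi] by (simp add: \<rho>_def)
    show "\<rho> (g i) < 1" by (simp add: \<rho>_def)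
    show "f ` (eball n (g i) (\<rho> (g i)) \<inter> K) \<subseteq> eball m (f (g i)) \<epsilon>"
    proof
      fix z assume "z \<in> f ` (eball n (g i) (\<rho> (g i)) \<inter> K)"
      then obtain y where y: "y \<in> K" "edist n (g i) y < \<rho> (g i)" "z = f y"
        by (auto simp: eball_def)
      then have "edist m (f (g i)) (f y) < \<epsilon>"
        using d(2)[OF gi y(1)] by (simp add: \<rho>_def)
      then show "z \<in> eball m (f (g i)) \<epsilon>" using fm y by (auto simp: eball_def)
    qed
  next
    show "K \<subseteq> (\<Union>i<N. eball n (g i) (\<rho> (g i)))"
    proof
      fix y assume "y \<in> K"
      then obtain x where "x \<in> C" "y \<in> Op x" using C(3) by blast
      then obtain i where "i < N" "x = g i" using g by blast
      then show "y \<in> (\<Union>i<N. eball n (g i) (\<rho> (g i)))"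
        using \<open>y \<in> Op x\<close> \<open>y \<in> K\<close> K by (auto simp: Op_def eball_def)
    qed
  qed
qed


definition stepL :: "nat \<Rightarrow> nat \<Rightarrow> ((nat \<Rightarrow> nat \<Rightarrow> real) \<times> (nat \<Rightarrow> real) \<times> (real \<Rightarrow> real))
   \<Rightarrow> (nat \<Rightarrow> real) \<Rightarrow> (nat \<Rightarrow> real)" where
  "stepL k0 k1 l x = radial k1 (snd (snd l)) (affine_layer k0 k1 (fst l) (fst (snd l)) x)"

primrec stT :: "nat \<Rightarrow> nat \<Rightarrow> (nat \<Rightarrow> ((nat \<Rightarrow> nat \<Rightarrow> real) \<times> (nat \<Rightarrow> real) \<times> (real \<Rightarrow> real)))
   \<Rightarrow> nat \<Rightarrow> (nat \<Rightarrow> real) \<Rightarrow> (nat \<Rightarrow> real)" where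
  "stT n D L 0 x = x"
| "stT n D L (Suc i) x = stepL (if i = 0 then n else D) D (L i) (stT n D L i x)"

lemma ff_cons: "feedforward (k0 # k1 # ks) (l # ls) x = feedforward (k1 # ks) ls (stepL k0 k1 l x)"
  by (cases l) (simp add: stepL_def)

lemma ff_main:
  "i \<le> N \<Longrightarrow> feedforward ((if i = 0 then n else D) # replicate (N - i) D @ [m]) (map L [i..<N] @ [Lf]) (stT n D L i x)
     = stepL (if N = 0 then n else D) m Lf (stT n D L N x)"
proof (induction "N - i" arbitrary: i)
  case 0
  then have "i = N" by simp
  then show ?case by (simp add: ff_cons)
next
  case (Suc k)
  then have iN: "i < N" by simp
  have r: "replicate (N - i) D = D # replicate (N - Suc i) D"
    using Suc(2) by (metis Suc_diff_Suc iN replicate_Suc)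
  have u: "[i..<N] = i # [Suc i..<N]" using iN by (simp add: upt_conv_Cons)
  have "feedforward ((if i = 0 then n else D) # replicate (N - i) D @ [m]) (map L [i..<N] @ [Lf]) (stT n D L i x)
     = feedforward ((if Suc i = 0 then n else D) # replicate (N - Suc i) D @ [m]) (map L [Suc i..<N] @ [Lf]) (stT n D L (Suc i) x)"
    by (simp add: r u ff_cons)
  also have "\<dots> = stepL (if N = 0 then n else D) m Lf (stT n D L N x)"
    using Suc iN by (intro Suc(1)) auto
  finally show ?case .
qed

definition Wmat :: "nat \<Rightarrow> real \<Rightarrow> (nat \<Rightarrow> real) \<Rightarrow> nat \<Rightarrow> nat \<Rightarrow> real" where
  "Wmat d s p = (\<lambda>a j. s * (if a = j then 1 else 0) + (if j = d then p a else 0))"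

lemma aff_eval:
  assumes "inRn k0 z"
  shows "affine_layer k0 k1 (Wmat d s p) b z = (\<lambda>a. if a < k1 then s * z a + p a * z d + b a else 0)"
proof (rule ext)
  fix a
  have za: "(\<Sum>j<k0. (if a = j then s * z j else 0)) = s * z a"
    using assms by (auto simp: inRn_def)
  have zd: "(\<Sum>j<k0. (if j = d then p a * z j else 0)) = p a * z d"
    using assms by (auto simp: inRn_def)
  have "(\<Sum>j<k0. Wmat d s p a j * z j) = (\<Sum>j<k0. (if a = j then s * z j else 0) + (if j = d then p a * z j else 0))"
    by (intro sum.cong) (auto simp: Wmat_def algebra_simps)
  also have "\<dots> = s * z a + p a * z d" by (simp add: sum.distrib za zd)
  finally show "affine_layer k0 k1 (Wmat d s p) b z a = (if a < k1 then s * z a + p a * z d + b a else 0)"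
    by (simp add: affine_layer_def)
qed

lemma vnorm_zero: assumes "inRn k v" "vnorm k v = 0" shows "v = (\<lambda>_. 0)"
proof (rule ext)
  fix j
  have "(\<Sum>i<k. (v i)^2) = 0" using assms(2) by (simp add: vnorm_def)
  then have "\<forall>i\<in>{..<k}. (v i)^2 = 0" by (subst sum_nonneg_eq_0_iff[symmetric]) auto
  then show "v j = 0" using assms(1) by (cases "j < k") (auto simp: inRn_def)
qed

lemma radial_id: assumes "inRn k v" shows "radial k (\<lambda>t. t) v = v"
proof (cases "vnorm k v = 0")
  case True then show ?thesis using vnorm_zero[OF assms] by (simp add: radial_def)
next
  case False then show ?thesis using assms by (auto simp: radial_def inRn_def)
qed

definition hcut :: "real \<Rightarrow> real \<Rightarrow> real" where
  "hcut \<theta> t = (if t < \<theta> then 0 else t)"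

lemma radial_hcut: assumes "inRn k v" "\<theta> > 0"
  shows "radial k (hcut \<theta>) v = (if vnorm k v < \<theta> then (\<lambda>_. 0) else v)"
proof (cases "vnorm k v = 0")
  case True then show ?thesis using vnorm_zero[OF assms(1)] assms(2) by (simp add: radial_def)
next
  case False then show ?thesis using assms by (auto simp: radial_def inRn_def hcut_def)
qed

lemma pd_id: "piecewise_diff (\<lambda>t. t)"
  unfolding piecewise_diff_def by (rule exI[of _ "{}"]) auto

lemma pd_hcut: "piecewise_diff (hcut \<theta>)"
  unfolding piecewise_diff_def
proof (rule exI[of _ "{\<theta>}"], intro conjI allI impI)
  fix x :: real assume "x \<notin> {\<theta>}"
  then have "x < \<theta> \<or> x > \<theta>" by auto
  then show "hcut \<theta> differentiable at x"
  proof
    assume "x < \<theta>"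
    have "((\<lambda>_. 0) has_derivative (\<lambda>_. 0)) (at x)" by (rule has_derivative_const)
    then have "(hcut \<theta> has_derivative (\<lambda>_. 0)) (at x)"
      by (rule has_derivative_transform_within_open[of _ _ _ _ "{..<\<theta>}"]) (use \<open>x < \<theta>\<close> in \<open>auto simp: hcut_def\<close>)
    then show ?thesis by (auto simp: differentiable_def)
  next
    assume "x > \<theta>"
    have "((\<lambda>t. t) has_derivative (\<lambda>t. t)) (at x)" by (rule has_derivative_ident)
    then have "(hcut \<theta> has_derivative (\<lambda>t. t)) (at x)"
      by (rule has_derivative_transform_within_open[of _ _ _ _ "{\<theta><..}"]) (use \<open>x > \<theta>\<close> in \<open>auto simp: hcut_def\<close>)
    then show ?thesis by (auto simp: differentiable_def)
  qed
qed (simp)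

lemma vnorm_ext: assumes "inRn k v" "k \<le> k'" shows "vnorm k' v = vnorm k v"
proof -
  have "(\<Sum>j<k'. (v j)^2) = (\<Sum>j<k. (v j)^2)"
    using assms by (intro sum.mono_neutral_right) (auto simp: inRn_def)
  then show ?thesis by (simp add: vnorm_def)
qed

lemma vnorm_scale: assumes "M > 0" shows "vnorm k (\<lambda>a. M * v a) = M * vnorm k v"
proof -
  have "(\<Sum>j<k. (M * v j)^2) = M^2 * (\<Sum>j<k. (v j)^2)"
    by (simp add: power_mult_distrib sum_distrib_left)
  then show ?thesis using assms by (simp add: vnorm_def real_sqrt_mult)
qed

lemma vnorm_flag: "vnorm (Suc d) (u(d := 1)) = sqrt ((vnorm d u)^2 + 1)"
proof -
  have "(\<Sum>j<d. ((u(d := 1)) j)^2) = (\<Sum>j<d. (u j)^2)" by (intro sum.cong) auto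
  moreover have "(vnorm d u)^2 = (\<Sum>j<d. (u j)^2)"
    unfolding vnorm_def by (simp add: sum_nonneg)
  ultimately show ?thesis by (simp add: vnorm_def)
qed


lemma edist_sym: "edist k u v = edist k v u"
  by (simp add: edist_def vnorm_def power2_commute)

lemma radial_keep: assumes "inRn k v" "\<theta> > 0" "v = (\<lambda>_. 0) \<or> \<theta> \<le> vnorm k v"
  shows "radial k (hcut \<theta>) v = v"
  using radial_hcut[OF assms(1,2)] assms(3) by auto

lemma sqrt_cmp: assumes "(e::real) \<ge> 0" "r > 0"
  shows "sqrt (e^2 + 1) < sqrt (1 + r^2) \<longleftrightarrow> e < r"
proof -
  have "sqrt (e^2 + 1) < sqrt (1 + r^2) \<longleftrightarrow> e^2 < r^2" by simp
  also have "\<dots> \<longleftrightarrow> e < r"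
  proof
    assume "e^2 < r^2" then show "e < r" using assms by (intro power_less_imp_less_base[of e 2 r]) auto
  next
    assume "e < r" then show "e^2 < r^2" using assms by (intro power_strict_mono) auto
  qed
  finally show ?thesis .
qed

theorem theorem5:
  fixes n m :: nat and K :: "(nat \<Rightarrow> real) set" and f :: "(nat \<Rightarrow> real) \<Rightarrow> (nat \<Rightarrow> real)"
    and \<epsilon> :: real
  assumes "K \<subseteq> {x. inRn n x}" and "compact K"
    and "continuous_on K f" and "\<forall>x\<in>K. inRn m (f x)"
    and "\<epsilon> > 0"
  shows "\<exists>F. is_radial_nn_fun (n # replicate (Ncov n m f K \<epsilon>) (max n m + 1) @ [m]) F
           \<and> (\<forall>x\<in>K. edist m (F x) (f x) < \<epsilon>)"
proof -
  define N where "N = Ncov n m f K \<epsilon>"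
  have "\<exists>c r. (\<forall>i<N. c i \<in> K \<and> 0 < r i \<and> r i < 1) \<and>
      K \<subseteq> (\<Union>i<N. eball n (c i) (r i)) \<and>
      (\<forall>i<N. f ` (eball n (c i) (r i) \<inter> K) \<subseteq> eball m (f (c i)) \<epsilon>)"
    unfolding N_def Ncov_def by (rule LeastI_ex) (rule cover_exists[OF assms])
  then obtain c :: "nat \<Rightarrow> nat \<Rightarrow> real" and r :: "nat \<Rightarrow> real"
    where cK: "\<And>i. i < N \<Longrightarrow> c i \<in> K" and r0: "\<And>i. i < N \<Longrightarrow> 0 < r i"
      and r1: "\<And>i. i < N \<Longrightarrow> r i < 1"
      and cover: "K \<subseteq> (\<Union>i<N. eball n (c i) (r i))"
      and img: "\<And>i. i < N \<Longrightarrow> f ` (eball n (c i) (r i) \<inter> K) \<subseteq> eball m (f (c i)) \<epsilon>"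
    by blast
  have Kn: "\<And>x. x \<in> K \<Longrightarrow> inRn n x" using assms(1) by blast
  have Kf: "\<And>x. x \<in> K \<Longrightarrow> inRn m (f x)" using assms(4) by blast
  define d where "d = max n m"
  define D where "D = Suc d"
  have nd: "n \<le> d" and md: "m \<le> d" by (auto simp: d_def)
  have cz: "\<And>j a. j < N \<Longrightarrow> n \<le> a \<Longrightarrow> c j a = 0" using cK Kn by (auto simp: inRn_def)
  have fz: "\<And>j a. j < N \<Longrightarrow> m \<le> a \<Longrightarrow> f (c j) a = 0" using cK Kf by (auto simp: inRn_def)
  define nz where "nz k j = vnorm D (\<lambda>a. f (c k) a - f (c j) a)" for k j
  have nz0: "nz k j \<ge> 0" for k j by (simp add: nz_def vnorm_def sum_nonneg)
  define M where "M = 1 + (\<Sum>k<N. \<Sum>j<N. if nz k j = 0 then 0 else 2 / nz k j)"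
  have tnn: "(if nz k j = 0 then 0 else 2 / nz k j) \<ge> 0" for k j using nz0[of k j] by auto
  have Mge: "M \<ge> 1" unfolding M_def using tnn by (simp add: sum_nonneg)
  then have Mpos: "M > 0" by simp
  have Mbig: "M * nz k j \<ge> 2" if "k < N" "j < N" "nz k j \<noteq> 0" for k j
  proof -
    have "2 / nz k j = (if nz k j = 0 then 0 else 2 / nz k j)" using that by simp
    also have "\<dots> \<le> (\<Sum>j'<N. if nz k j' = 0 then 0 else 2 / nz k j')"
      using that tnn by (intro member_le_sum[of j "{..<N}" "\<lambda>j'. if nz k j' = 0 then 0 else 2 / nz k j'"]) auto
    also have "\<dots> \<le> (\<Sum>k'<N. \<Sum>j'<N. if nz k' j' = 0 then 0 else 2 / nz k' j')"
      using that tnn by (intro member_le_sum[of k "{..<N}"]) (auto intro: sum_nonneg)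
    also have "\<dots> \<le> M" by (simp add: M_def)
    finally have "2 / nz k j \<le> M" .
    moreover have "nz k j > 0" using nz0[of k j] that by simp
    ultimately show ?thesis by (simp add: divide_le_eq mult.commute)
  qed
  define \<beta> where "\<beta> i a = M * (f (c (i - 1)) a - f (c i) a)" for i a
  define g where "g i a = c i a - c (i - 1) a + \<beta> i a" for i a
  define \<theta> where "\<theta> i = sqrt (1 + (r i)^2)" for i
  have th0: "\<theta> i > 0" for i unfolding \<theta>_def by (simp add: add_pos_nonneg)
  have th2: "\<theta> i < 2" if "i < N" for i
  proof -
    have "(r i)^2 < 1" using r0[OF that] r1[OF that] by (simp add: power_less_one_iff abs_less_iff)
    then have "1 + (r i)^2 < 2^2" by simp
    then show ?thesis unfolding \<theta>_def by (metis real_sqrt_less_iff real_sqrt_pow2_iff zero_le_numeral zero_le_power2 real_sqrt_power real_sqrt_abs abs_numeral)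
  qed
  define L where "L i = (Wmat d 1 (\<lambda>a. if a < d then - g i a else 0),
      (if i = 0 then (\<lambda>a. (if a = d then 1 else 0) - c 0 a) else (\<lambda>a. if a < d then \<beta> i a else 0)),
      hcut (\<theta> i))" for i
  define Lf where "Lf = (Wmat d (1 / M) (\<lambda>_. 0), f (c (N - 1)), (\<lambda>t::real. t))"
  define F where "F = feedforward (n # replicate N D @ [m]) (map L [0..<N] @ [Lf])"
  have isnn: "is_radial_nn_fun (n # replicate N D @ [m]) F"
    unfolding is_radial_nn_fun_def F_def
    by (rule exI[of _ "map L [0..<N] @ [Lf]"]) (auto simp: L_def Lf_def pd_hcut pd_id)
  have approx: "edist m (F x) (f x) < \<epsilon>" if xK: "x \<in> K" for x
  proof -
    have xn: "inRn n x" using Kn xK .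
    have xz: "\<And>a. n \<le> a \<Longrightarrow> x a = 0" using xn by (auto simp: inRn_def)
    have "\<exists>i. i < N \<and> x \<in> eball n (c i) (r i)" using cover xK by blast
    define k where "k = (LEAST i. i < N \<and> x \<in> eball n (c i) (r i))"
    have kN: "k < N" and kin: "x \<in> eball n (c k) (r k)"
      using LeastI_ex[OF \<open>\<exists>i. i < N \<and> x \<in> eball n (c i) (r i)\<close>] unfolding k_def by auto
    have knot: "x \<notin> eball n (c i) (r i)" if "i < k" for i
      using not_less_Least[of i "\<lambda>i. i < N \<and> x \<in> eball n (c i) (r i)"] that kN
      unfolding k_def[symmetric] by auto
    define U where "U j = (\<lambda>a. x a - c j a)(d := 1)" for j
    define V where "V j = (\<lambda>a. M * (f (c k) a - f (c j) a))" for j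
    have UD: "inRn D (U j)" if "j < N" for j
      using that nd cz xz by (auto simp: inRn_def U_def D_def)
    have VD: "inRn D (V j)" if "j < N" for j
      using that md fz kN by (auto simp: inRn_def V_def D_def)
    have Unorm: "vnorm D (U j) < \<theta> j \<longleftrightarrow> x \<in> eball n (c j) (r j)" if "j < N" for j
    proof -
      have "vnorm D (U j) = sqrt ((vnorm d (\<lambda>a. x a - c j a))^2 + 1)"
        unfolding U_def D_def by (rule vnorm_flag)
      also have "vnorm d (\<lambda>a. x a - c j a) = vnorm n (\<lambda>a. x a - c j a)"
        using nd xz cz[OF that] by (intro vnorm_ext) (auto simp: inRn_def)
      also have "\<dots> = edist n (c j) x" unfolding edist_def vnorm_def by (simp add: power2_commute)
      finally have "vnorm D (U j) = sqrt ((edist n (c j) x)^2 + 1)" .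
      moreover have "edist n (c j) x \<ge> 0" by (simp add: edist_def vnorm_def sum_nonneg)
      ultimately show ?thesis using sqrt_cmp[of "edist n (c j) x" "r j"] r0[OF that] xn
        by (auto simp: \<theta>_def eball_def)
    qed
    have Vkeep: "radial D (hcut (\<theta> i)) (V j) = V j" if "j < N" "i < N" for i j
    proof (rule radial_keep[OF VD[OF that(1)] th0])
      show "V j = (\<lambda>_. 0) \<or> \<theta> i \<le> vnorm D (V j)"
      proof (cases "nz k j = 0")
        case True
        have "inRn D (\<lambda>a. f (c k) a - f (c j) a)"
          using that md fz kN by (auto simp: inRn_def D_def)
        then have "(\<lambda>a. f (c k) a - f (c j) a) = (\<lambda>_. 0)"
          using True by (intro vnorm_zero) (auto simp: nz_def)
        then have "V j = (\<lambda>_. 0)" unfolding V_def by (metis mult_zero_right)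
        then show ?thesis by simp
      next
        case False
        have "vnorm D (V j) = M * nz k j" unfolding V_def nz_def using Mpos by (rule vnorm_scale)
        then show ?thesis using Mbig[OF kN that(1) False] th2[OF that(2)] by simp
      qed
    qed
    have inv: "stT n D L i x = (if i \<le> k then U (i - 1) else V (i - 1))" if "0 < i" "i \<le> N" for i
      using that
    proof (induction i)
      case 0 then show ?case by simp
    next
      case (Suc i)
      then have iN: "i < N" by simp
      show ?case
      proof (cases "i = 0")
        case True
        have aff: "affine_layer n D (fst (L 0)) (fst (snd (L 0))) x = U 0"
        proof -
          have "affine_layer n D (fst (L 0)) (fst (snd (L 0))) x
             = (\<lambda>a. if a < D then 1 * x a + (if a < d then - g 0 a else 0) * x d + ((if a = d then 1 else 0) - c 0 a) else 0)"
            unfolding L_def by (simp add: aff_eval[OF xn])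
          also have "\<dots> = U 0"
            using xz cz[OF iN[unfolded True]] nd by (auto simp: U_def D_def)
          finally show ?thesis .
        qed
        have "stT n D L (Suc i) x = radial D (hcut (\<theta> 0)) (U 0)"
          using True aff by (simp add: stepL_def L_def)
        also have "\<dots> = (if Suc i \<le> k then U (Suc i - 1) else V (Suc i - 1))"
        proof (cases "k = 0")
          case True
          then have "vnorm D (U 0) < \<theta> 0" using Unorm[OF kN] kin by simp
          then show ?thesis using radial_hcut[OF UD[OF kN[unfolded True]] th0] \<open>i = 0\<close> True
            by (simp add: V_def)
        next
          case False
          then have "\<not> vnorm D (U 0) < \<theta> 0" using Unorm[OF iN[unfolded \<open>i = 0\<close>]] knot[of 0] by simp
          then show ?thesis using radial_hcut[OF UD[OF iN[unfolded \<open>i = 0\<close>]] th0] \<open>i = 0\<close> False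
            by simp
        qed
        finally show ?thesis .
      next
        case False
        then have IH: "stT n D L i x = (if i \<le> k then U (i - 1) else V (i - 1))"
          using Suc by simp
        have st: "stT n D L (Suc i) x = radial D (hcut (\<theta> i)) (affine_layer D D (fst (L i)) (fst (snd (L i))) (stT n D L i x))"
          using False by (simp add: stepL_def L_def)
        show ?thesis
        proof (cases "i \<le> k")
          case True
          have "affine_layer D D (fst (L i)) (fst (snd (L i))) (U (i - 1))
             = affine_layer D D (Wmat d 1 (\<lambda>a. if a < d then - g i a else 0)) (\<lambda>a. if a < d then \<beta> i a else 0) (U (i - 1))"
            unfolding L_def using False by simp
          also have "\<dots> = (\<lambda>a. if a < D then 1 * U (i - 1) a + (if a < d then - g i a else 0) * U (i - 1) d + (if a < d then \<beta> i a else 0) else 0)"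
            by (rule aff_eval[OF UD]) (use iN in simp)
          also have "\<dots> = U i"
            using xz cz[OF iN] nd by (auto simp: U_def D_def g_def)
          finally have aff: "affine_layer D D (fst (L i)) (fst (snd (L i))) (U (i - 1)) = U i" .
          show ?thesis
          proof (cases "i = k")
            case True
            then have "vnorm D (U i) < \<theta> i" using Unorm[OF kN] kin by simp
            then show ?thesis using st IH aff radial_hcut[OF UD[OF iN] th0] \<open>i \<le> k\<close> True
              by (simp add: V_def)
          next
            case False
            then have "\<not> vnorm D (U i) < \<theta> i" using Unorm[OF iN] knot[of i] \<open>i \<le> k\<close> by simp
            then show ?thesis using st IH aff radial_hcut[OF UD[OF iN] th0] \<open>i \<le> k\<close> False
              by simp
          qed
        next
          case False
          have "affine_layer D D (fst (L i)) (fst (snd (L i))) (V (i - 1))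
             = affine_layer D D (Wmat d 1 (\<lambda>a. if a < d then - g i a else 0)) (\<lambda>a. if a < d then \<beta> i a else 0) (V (i - 1))"
            unfolding L_def using \<open>i \<noteq> 0\<close> by simp
          also have "\<dots> = (\<lambda>a. if a < D then 1 * V (i - 1) a + (if a < d then - g i a else 0) * V (i - 1) d + (if a < d then \<beta> i a else 0) else 0)"
            by (rule aff_eval[OF VD]) (use iN in simp)
          also have "\<dots> = V i"
          proof (rule ext)
            fix a
            have Vd: "V (i - 1) d = 0" using fz[of "i - 1" d] fz[OF kN, of d] md iN by (simp add: V_def)
            show "(if a < D then 1 * V (i - 1) a + (if a < d then - g i a else 0) * V (i - 1) d + (if a < d then \<beta> i a else 0) else 0) = V i a"
              using fz[OF kN, of a] fz[OF iN, of a] fz[of "i - 1" a] md iN Vd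
              by (auto simp: V_def D_def \<beta>_def algebra_simps)
          qed
          finally have aff: "affine_layer D D (fst (L i)) (fst (snd (L i))) (V (i - 1)) = V i" .
          show ?thesis using st IH aff Vkeep[OF iN iN] False by simp
        qed
      qed
    qed
    have N0: "N \<noteq> 0" using kN by simp
    have "F x = stepL D m Lf (stT n D L N x)"
      using ff_main[of 0 N n D m L Lf x] N0 by (simp add: F_def)
    also have "stT n D L N x = V (N - 1)" using inv[of N] N0 kN by simp
    also have "stepL D m Lf (V (N - 1)) = f (c k)"
    proof -
      have "affine_layer D m (fst Lf) (fst (snd Lf)) (V (N - 1))
         = affine_layer D m (Wmat d (1 / M) (\<lambda>_. 0)) (f (c (N - 1))) (V (N - 1))"
        unfolding Lf_def by simp
      also have "\<dots> = (\<lambda>a. if a < m then 1 / M * V (N - 1) a + 0 * V (N - 1) d + f (c (N - 1)) a else 0)"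
        by (rule aff_eval[OF VD]) (use N0 in simp)
      also have "\<dots> = f (c k)"
        using fz[OF kN] Mpos by (auto simp: V_def)
      finally show ?thesis using radial_id[OF Kf[OF cK[OF kN]]] by (simp add: stepL_def Lf_def)
    qed
    finally have "F x = f (c k)" .
    moreover have "f x \<in> eball m (f (c k)) \<epsilon>" using img[OF kN] kin xK by blast
    ultimately show ?thesis by (simp add: eball_def)
  qed
  show ?thesis
    using isnn approx unfolding N_def[symmetric] D_def d_def by auto
qed

end
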